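(* Let $G$ be an unweighted digraph without loops having a reciprocal leaf $i$, and let $\widetilde G$ be the digraph obtained from $G$ by deleting vertex $i$ together with the two edges joining it to the rest of $G$. Let $M(t)$ and $\widetilde M(t)$ be the directed deformed graph Laplacians of $G$ and $\widetilde G$. Then $M(t)$ and $\widetilde M(t)$ have the same finite eigenvalues, with the same algebraic and the same geometric multiplicities.
   Context: A digraph $G=(V,E)$, no loops or multiple edges, adjacency matrix $A$ ($A_{ij}=1$ iff $(i,j)\in E$); $S=A\circ A^T$, $D=\mathrm{diag}(\mathrm{diag}(A^2))$; directed deformed graph Laplacian $M(t)=I-At+(D-I)t^2+(A-S)t^3$. A vertex $i$ is a reciprocal leaf if there is exactly one vertex $j\neq i$ with $(i,j)\in E$ or $(j,i)\in E$, and both $(i,j),(j,i)\in E$. For a regular square polynomial matrix $M(t)$, a finite eigenvalue $\lambda$ is a root of $\det M(t)$, its algebraic multiplicity is its multiplicity as such a root, and its geometric multiplicity is $\dim\ker M(\lambda)$. *)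

theory Defs
  imports "HOL-Computational_Algebra.Polynomial" "Jordan_Normal_Form.Matrix_Kernel"
begin

definition digraph :: "nat \<Rightarrow> (nat \<times> nat) set \<Rightarrow> bool" where
  "digraph n E \<longleftrightarrow> E \<subseteq> {..<n} \<times> {..<n} \<and> (\<forall>v. (v, v) \<notin> E)"

definition adj_mat :: "nat \<Rightarrow> (nat \<times> nat) set \<Rightarrow> complex mat" where
  "adj_mat n E = mat n n (\<lambda>(i, j). if (i, j) \<in> E then 1 else 0)"

definition hadamard :: "'a::times mat \<Rightarrow> 'a mat \<Rightarrow> 'a mat" where
  "hadamard A B = mat (dim_row A) (dim_col A) (\<lambda>(i, j). A $$ (i, j) * B $$ (i, j))"

definition diag_part :: "'a::zero mat \<Rightarrow> 'a mat" where
  "diag_part B = mat (dim_row B) (dim_col B) (\<lambda>(i, j). if i = j then B $$ (i, i) else 0)"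

definition poly_mat3 :: "'a::comm_ring_1 mat \<Rightarrow> 'a mat \<Rightarrow> 'a mat \<Rightarrow> 'a mat \<Rightarrow> 'a poly mat" where
  "poly_mat3 C0 C1 C2 C3 = mat (dim_row C0) (dim_col C0)
     (\<lambda>ij. [:C0 $$ ij, C1 $$ ij, C2 $$ ij, C3 $$ ij:])"

definition ddgl :: "nat \<Rightarrow> (nat \<times> nat) set \<Rightarrow> complex poly mat" where
  "ddgl n E = (let A = adj_mat n E; S = hadamard A (transpose_mat A);
                   D = diag_part (A * A) in
     poly_mat3 (1\<^sub>m n) (- A) (D - 1\<^sub>m n) (A - S))"

definition eval_pmat :: "'a::comm_ring_1 poly mat \<Rightarrow> 'a \<Rightarrow> 'a mat" where
  "eval_pmat M x = map_mat (\<lambda>p. poly p x) M"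

definition regular_pmat :: "'a::comm_ring_1 poly mat \<Rightarrow> bool" where
  "regular_pmat M \<longleftrightarrow> square_mat M \<and> det M \<noteq> 0"

definition finite_eigenvalue :: "'a::comm_ring_1 poly mat \<Rightarrow> 'a \<Rightarrow> bool" where
  "finite_eigenvalue M x \<longleftrightarrow> regular_pmat M \<and> poly (det M) x = 0"

definition alg_mult :: "'a::idom poly mat \<Rightarrow> 'a \<Rightarrow> nat" where
  "alg_mult M x = order x (det M)"

definition geom_mult :: "'a::field poly mat \<Rightarrow> 'a \<Rightarrow> nat" where
  "geom_mult M x = kernel_dim (eval_pmat M x)"

definition reciprocal_leaf :: "(nat \<times> nat) set \<Rightarrow> nat \<Rightarrow> bool" where
  "reciprocal_leaf E i \<longleftrightarrow> (\<exists>!j. j \<noteq> i \<and> ((i, j) \<in> E \<or> (j, i) \<in> E))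
     \<and> (\<forall>j. j \<noteq> i \<and> ((i, j) \<in> E \<or> (j, i) \<in> E) \<longrightarrow> (i, j) \<in> E \<and> (j, i) \<in> E)"

text \<open>Deleting vertex i from a digraph on {0..<n}, relabelling the remaining
  vertices order-preservingly onto {0..<n-1}.\<close>
definition del_vertex :: "nat \<Rightarrow> (nat \<times> nat) set \<Rightarrow> (nat \<times> nat) set" where
  "del_vertex i E = {(u, v). (let f = (\<lambda>k. if k < i then k else Suc k) in (f u, f v) \<in> E)}"

end

theory Submission imports Defs "Jordan_Normal_Form.Column_Operations" begin

definition pf :: "nat \<Rightarrow> nat \<Rightarrow> nat" where
  "pf i c = (if c = 0 then i else insert_index i (c - 1))"
definition pg :: "nat \<Rightarrow> nat \<Rightarrow> nat" where
  "pg i r = (if r = i then 0 else Suc (if r < i then r else r - 1))"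

lemma pf_pg: "r < n \<Longrightarrow> i < n \<Longrightarrow> pf i (pg i r) = r"
  by (auto simp: pf_def pg_def insert_index_def)
lemma pg_pf: "c < n \<Longrightarrow> i < n \<Longrightarrow> pg i (pf i c) = c"
  by (auto simp: pf_def pg_def insert_index_def)
lemma pf_lt: "c < n \<Longrightarrow> i < n \<Longrightarrow> pf i c < n"
  by (auto simp: pf_def insert_index_def)
lemma pg_lt: "r < n \<Longrightarrow> i < n \<Longrightarrow> pg i r < n"
  by (auto simp: pg_def)
lemma pf_iff: "c < n \<Longrightarrow> r < n \<Longrightarrow> i < n \<Longrightarrow> (r = pf i c) = (c = pg i r)"
  using pf_pg pg_pf by metis

lemma sum_delta_pg:
  assumes "r < n" "i < n"
  shows "(\<Sum>k\<in>{0..<n}. (if r = pf i k then 1 else 0) * (h k :: 'a::semiring_1)) = h (pg i r)"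
proof -
  have "(\<Sum>k\<in>{0..<n}. (if r = pf i k then 1 else 0) * h k) = (\<Sum>k\<in>{0..<n}. if k = pg i r then h k else 0)"
    by (rule sum.cong, auto simp: pf_iff[OF _ assms(1,2)])
  also have "\<dots> = h (pg i r)" using pg_lt[OF assms] by simp
  finally show ?thesis .
qed

lemma sum_delta_pg':
  assumes "r < n" "i < n"
  shows "(\<Sum>k\<in>{0..<n}. (h k :: 'a::semiring_1) * (if r = pf i k then 1 else 0)) = h (pg i r)"
proof -
  have "(\<Sum>k\<in>{0..<n}. h k * (if r = pf i k then 1 else 0)) = (\<Sum>k\<in>{0..<n}. if k = pg i r then h k else 0)"
    by (rule sum.cong, auto simp: pf_iff[OF _ assms(1,2)])
  also have "\<dots> = h (pg i r)" using pg_lt[OF assms] by simp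
  finally show ?thesis .
qed

definition Pm :: "nat \<Rightarrow> nat \<Rightarrow> 'a::semiring_1 mat" where
  "Pm n i = mat n n (\<lambda>(r,c). if r = pf i c then 1 else 0)"
definition Qm :: "nat \<Rightarrow> nat \<Rightarrow> 'a::semiring_1 mat" where
  "Qm n i = mat n n (\<lambda>(r,c). if c = pf i r then 1 else 0)"

lemma Pm_dims[simp]: "dim_row (Pm n i) = n" "dim_col (Pm n i) = n" "dim_row (Qm n i) = n" "dim_col (Qm n i) = n"
  by (auto simp: Pm_def Qm_def)

lemma Pm_mult: assumes X: "X \<in> carrier_mat n nc" and r: "r < n" and c: "c < nc" and i: "i < n"
  shows "(Pm n i * X) $$ (r, c) = X $$ (pg i r, c)"
  using X r c i by (simp add: Pm_def scalar_prod_def sum_delta_pg)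

lemma mult_Qm: assumes X: "X \<in> carrier_mat nr n" and r: "r < nr" and c: "c < n" and i: "i < n"
  shows "(X * Qm n i) $$ (r, c) = X $$ (r, pg i c)"
  using X r c i by (simp add: Qm_def scalar_prod_def sum_delta_pg')

lemma Pm_carrier[simp]: "Pm n i \<in> carrier_mat n n" and Qm_carrier[simp]: "Qm n i \<in> carrier_mat n n"
  by (auto simp: Pm_def Qm_def)

lemma PQ: assumes i: "i < n" shows "Pm n i * Qm n i = 1\<^sub>m n"
proof (rule eq_matI)
  fix r c assume "r < dim_row (1\<^sub>m n :: 'a mat)" "c < dim_col (1\<^sub>m n :: 'a mat)"
  hence rc: "r < n" "c < n" by auto
  show "(Pm n i * Qm n i) $$ (r, c) = (1\<^sub>m n :: 'a mat) $$ (r, c)"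
    unfolding Pm_mult[OF Qm_carrier rc i] using rc i by (auto simp: Qm_def pf_pg pg_lt)
qed (auto simp: Pm_def Qm_def)

lemma QP: assumes i: "i < n" shows "Qm n i * Pm n i = 1\<^sub>m n"
proof (rule eq_matI)
  fix r c assume "r < dim_row (1\<^sub>m n :: 'a mat)" "c < dim_col (1\<^sub>m n :: 'a mat)"
  hence rc: "r < n" "c < n" by auto
  show "(Qm n i * Pm n i) $$ (r, c) = (1\<^sub>m n :: 'a mat) $$ (r, c)"
  proof -
    have "(Qm n i * Pm n i) $$ (r, c) = (\<Sum>k\<in>{0..<n}. if k = pf i r then (if k = pf i c then 1 else 0) else (0::'a))"
    proof -
      have "(Qm n i * Pm n i) $$ (r, c) = (\<Sum>k\<in>{0..<n}. Qm n i $$ (r,k) * Pm n i $$ (k,c))"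
        using rc by (simp add: scalar_prod_def)
      also have "\<dots> = (\<Sum>k\<in>{0..<n}. if k = pf i r then (if k = pf i c then 1 else 0) else (0::'a))"
        by (rule sum.cong, simp, simp add: Qm_def Pm_def rc)
      finally show ?thesis .
    qed
    also have "\<dots> = (if pf i r = pf i c then 1 else 0)" by (simp add: pf_lt[OF rc(1) i])
    also have "\<dots> = (1\<^sub>m n :: 'a mat) $$ (r, c)" using rc i pg_pf[OF rc(1) i] pg_pf[OF rc(2) i] by (metis index_one_mat(1))
    finally show ?thesis .
  qed
qed (auto simp: Qm_def)

lemma block_entries:
  fixes Z :: "'a::comm_ring_1 mat"
  assumes Z: "Z \<in> carrier_mat (Suc m) (Suc m)" and i: "i < Suc m"
    and Zii: "Z $$ (i,i) = 1"
    and Zk: "\<And>k. k < Suc m \<Longrightarrow> k \<noteq> i \<Longrightarrow> Z $$ (i,k) = 0 \<and> Z $$ (k,i) = 0"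
  shows "Z = Pm (Suc m) i * four_block_mat (1\<^sub>m 1) (0\<^sub>m 1 m) (0\<^sub>m m 1) (mat_delete Z i i) * Qm (Suc m) i"
    (is "_ = ?P * ?B * ?Q")
proof -
  have B: "?B \<in> carrier_mat (Suc m) (Suc m)"
    using four_block_carrier_mat[of "1\<^sub>m 1 :: 'a mat" 1 1 "mat_delete Z i i" m m] mat_delete_carrier[OF Z, of i i] by auto
  have Bent: "?B $$ (a, b) = (if a = 0 then (if b = 0 then 1 else 0) else if b = 0 then 0
     else Z $$ (if a - 1 < i then a - 1 else a, if b - 1 < i then b - 1 else b))"
    if "a < Suc m" "b < Suc m" for a b
    using that Z by (auto simp: mat_delete_def)
  show ?thesis
  proof (rule eq_matI)
    fix r c assume "r < dim_row (?P * ?B * ?Q)" "c < dim_col (?P * ?B * ?Q)"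
    hence rc: "r < Suc m" "c < Suc m" by auto
    have PB: "?P * ?B \<in> carrier_mat (Suc m) (Suc m)" using B by (intro mult_carrier_mat[OF Pm_carrier])
    have "(?P * ?B * ?Q) $$ (r, c) = ?B $$ (pg i r, pg i c)"
      unfolding mult_Qm[OF PB rc i] Pm_mult[OF B rc(1) pg_lt[OF rc(2) i] i] ..
    also have "\<dots> = Z $$ (r, c)"
      using rc i Zii Zk[of r] Zk[of c] unfolding Bent[OF pg_lt[OF rc(1) i] pg_lt[OF rc(2) i]]
      by (auto simp: pg_def)
    finally show "Z $$ (r, c) = (?P * ?B * ?Q) $$ (r, c)" ..
  qed (use Z in auto)
qed

lemma block_kernel:
  fixes Z :: "'a::field mat"
  assumes Z: "Z \<in> carrier_mat (Suc m) (Suc m)" and i: "i < Suc m"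
    and Zii: "Z $$ (i,i) = 1"
    and Zk: "\<And>k. k < Suc m \<Longrightarrow> k \<noteq> i \<Longrightarrow> Z $$ (i,k) = 0 \<and> Z $$ (k,i) = 0"
  shows "kernel_dim Z = kernel_dim (mat_delete Z i i)"
proof -
  let ?B = "four_block_mat (1\<^sub>m 1) (0\<^sub>m 1 m) (0\<^sub>m m 1) (mat_delete Z i i)"
  have D: "mat_delete Z i i \<in> carrier_mat m m" using mat_delete_carrier[OF Z, of i i] by auto
  have B: "?B \<in> carrier_mat (Suc m) (Suc m)"
    using four_block_carrier_mat[of "1\<^sub>m 1 :: 'a mat" 1 1 "mat_delete Z i i" m m] D by auto
  have wit: "similar_mat_wit Z ?B (Pm (Suc m) i) (Qm (Suc m) i)"
    unfolding similar_mat_wit_def Let_def using Z B PQ[OF i] QP[OF i] block_entries[OF Z i Zii Zk]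
    by auto
  have "kernel_dim Z = kernel.dim (Suc m) Z" using Z by (simp add: kernel_dim_def)
  also have "\<dots> = kernel.dim (Suc m) ?B" by (rule similar_mat_wit_kernel_dim[OF Z wit])
  also have "\<dots> = kernel.dim (1 + m) ?B" by simp
  also have "\<dots> = kernel.dim 1 (1\<^sub>m 1 :: 'a mat) + kernel.dim m (mat_delete Z i i)"
    by (rule kernel_four_block_0_mat[OF refl _ D], auto)
  also have "\<dots> = kernel_dim (mat_delete Z i i)" using D Z kernel_one_mat(1)[of 1, where 'a='a]
    by (simp add: kernel_dim_def)
  finally show ?thesis .
qed

lemma block_det:
  fixes Z :: "'a::comm_ring_1 mat"
  assumes Z: "Z \<in> carrier_mat n n" and i: "i < n"
    and Zii: "Z $$ (i,i) = 1"
    and Zk: "\<And>k. k < n \<Longrightarrow> k \<noteq> i \<Longrightarrow> Z $$ (i,k) = 0"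
  shows "det Z = det (mat_delete Z i i)"
proof -
  have "det Z = (\<Sum>k<n. Z $$ (i,k) * cofactor Z i k)" by (rule laplace_expansion_row[OF Z i])
  also have "\<dots> = (\<Sum>k\<in>{i}. Z $$ (i,k) * cofactor Z i k)"
    by (rule sum.mono_neutral_right, insert i Zk, auto)
  also have "\<dots> = Z $$ (i,i) * cofactor Z i i" by simp
  also have "\<dots> = det (mat_delete Z i i)" unfolding Zii cofactor_def by simp
  finally show ?thesis .
qed

lemma transform:
  fixes M :: "'a::comm_ring_1 mat"
  assumes M: "M \<in> carrier_mat (Suc m) (Suc m)" and M': "M' \<in> carrier_mat m m"
    and i: "i < Suc m" and j: "j < Suc m" and ji: "j \<noteq> i"
    and Mii: "M $$ (i,i) = 1"
    and Mrow: "\<And>c. c < Suc m \<Longrightarrow> c \<noteq> i \<Longrightarrow> M $$ (i,c) = (if c = j then - t else 0)"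
    and Mcol: "\<And>r. r < Suc m \<Longrightarrow> r \<noteq> i \<Longrightarrow> M $$ (r,i) = (if r = j then - t else 0)"
    and M'e: "\<And>r c. r < m \<Longrightarrow> c < m \<Longrightarrow> M' $$ (r,c) = M $$ (insert_index i r, insert_index i c)
        - (if insert_index i r = j \<and> insert_index i c = j then t * t else 0)"
  defines "K \<equiv> addcol t j i (addrow t j i M)"
  shows "K \<in> carrier_mat (Suc m) (Suc m)" "K $$ (i,i) = 1"
    "\<And>k. k < Suc m \<Longrightarrow> k \<noteq> i \<Longrightarrow> K $$ (i,k) = 0 \<and> K $$ (k,i) = 0"
    "mat_delete K i i = M'"
proof -
  have Kd: "dim_row K = Suc m" "dim_col K = Suc m" using M by (auto simp: K_def)
  have Ke: "K $$ (r,c) = (if c = j then t * (if r = j then t * M $$ (i,i) + M $$ (r,i) else M $$ (r,i))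
       + (if r = j then t * M $$ (i,c) + M $$ (r,c) else M $$ (r,c))
      else (if r = j then t * M $$ (i,c) + M $$ (r,c) else M $$ (r,c)))" if "r < Suc m" "c < Suc m" for r c
    using that M j i by (simp add: K_def)
  show "K \<in> carrier_mat (Suc m) (Suc m)" using Kd by auto
  show "K $$ (i,i) = 1" using Ke[OF i i] ji Mii by simp
  show "K $$ (i,k) = 0 \<and> K $$ (k,i) = 0" if "k < Suc m" "k \<noteq> i" for k
    using Ke[OF i that(1)] Ke[OF that(1) i] ji Mii Mrow[OF that] Mcol[OF that] Mcol[OF j ji] Mrow[OF j ji] that
    by (auto simp: algebra_simps)
  show "mat_delete K i i = M'"
  proof (rule eq_matI)
    fix r c assume "r < dim_row M'" "c < dim_col M'"
    hence rc: "r < m" "c < m" using M' by auto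
    have ii: "insert_index i r < Suc m" "insert_index i r \<noteq> i" "insert_index i c < Suc m" "insert_index i c \<noteq> i"
      using rc by (auto simp: insert_index_def)
    have "mat_delete K i i $$ (r,c) = K $$ (insert_index i r, insert_index i c)"
      using rc Kd by (simp add: mat_delete_def insert_index_def)
    also have "\<dots> = M' $$ (r,c)"
      unfolding Ke[OF ii(1) ii(3)] M'e[OF rc] using Mrow[OF ii(3,4)] Mcol[OF ii(1,2)] Mii ji
      by (auto simp: algebra_simps)
    finally show "mat_delete K i i $$ (r,c) = M' $$ (r,c)" .
  qed (use Kd M' in auto)
qed

lemma transform_det:
  fixes M :: "'a::comm_ring_1 mat"
  assumes M: "M \<in> carrier_mat (Suc m) (Suc m)" and M': "M' \<in> carrier_mat m m"
    and i: "i < Suc m" and j: "j < Suc m" and ji: "j \<noteq> i"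
    and Mii: "M $$ (i,i) = 1"
    and Mrow: "\<And>c. c < Suc m \<Longrightarrow> c \<noteq> i \<Longrightarrow> M $$ (i,c) = (if c = j then - t else 0)"
    and Mcol: "\<And>r. r < Suc m \<Longrightarrow> r \<noteq> i \<Longrightarrow> M $$ (r,i) = (if r = j then - t else 0)"
    and M'e: "\<And>r c. r < m \<Longrightarrow> c < m \<Longrightarrow> M' $$ (r,c) = M $$ (insert_index i r, insert_index i c)
        - (if insert_index i r = j \<and> insert_index i c = j then t * t else 0)"
  shows "det M = det M'"
proof -
  note T = transform[OF M M' i j ji Mii Mrow Mcol M'e]
  have R: "addrow t j i M \<in> carrier_mat (Suc m) (Suc m)" using M by simp
  have "det M = det (addrow t j i M)" using det_addrow[OF i ji M] by simp
  also have "\<dots> = det (addcol t j i (addrow t j i M))" using det_addcol[OF i ji R] by simp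
  also have "\<dots> = det M'" using block_det[OF T(1) i T(2)] T(3) T(4) by auto
  finally show ?thesis .
qed

lemma transform_kernel:
  fixes M :: "'a::field mat"
  assumes M: "M \<in> carrier_mat (Suc m) (Suc m)" and M': "M' \<in> carrier_mat m m"
    and i: "i < Suc m" and j: "j < Suc m" and ji: "j \<noteq> i"
    and Mii: "M $$ (i,i) = 1"
    and Mrow: "\<And>c. c < Suc m \<Longrightarrow> c \<noteq> i \<Longrightarrow> M $$ (i,c) = (if c = j then - t else 0)"
    and Mcol: "\<And>r. r < Suc m \<Longrightarrow> r \<noteq> i \<Longrightarrow> M $$ (r,i) = (if r = j then - t else 0)"
    and M'e: "\<And>r c. r < m \<Longrightarrow> c < m \<Longrightarrow> M' $$ (r,c) = M $$ (insert_index i r, insert_index i c)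
        - (if insert_index i r = j \<and> insert_index i c = j then t * t else 0)"
  shows "kernel_dim M = kernel_dim M'"
proof -
  note T = transform[OF M M' i j ji Mii Mrow Mcol M'e]
  let ?n = "Suc m"
  have R: "addrow t j i M = addrow_mat ?n t j i * M" by (rule addrow_mat[OF M i])
  have Rc: "addrow t j i M \<in> carrier_mat ?n ?n" using M by simp
  have C: "addcol t j i (addrow t j i M) = addrow t j i M * addrow_mat ?n t i j" by (rule addcol_mat[OF Rc i])
  have inv1: "addrow_mat ?n (- t) j i * addrow_mat ?n t j i = 1\<^sub>m ?n"
    using addrow_mat_inv[OF j i ji, of "- t"] by simp
  have inv2: "addrow_mat ?n t i j * addrow_mat ?n (- t) i j = 1\<^sub>m ?n"
    using addrow_mat_inv[OF i j, of t] ji by simp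
  have "kernel_dim M = kernel.dim ?n M" using M by (simp add: kernel_dim_def)
  also have "\<dots> = kernel.dim ?n (addrow_mat ?n t j i * M)"
    unfolding mat_kernel_mult_eq[OF M addrow_mat_carrier addrow_mat_carrier inv1] ..
  also have "\<dots> = kernel.dim ?n (addrow t j i M * addrow_mat ?n t i j)"
    unfolding R using mat_kernel_dim_mult_eq_right[OF _ addrow_mat_carrier addrow_mat_carrier inv2, of "addrow_mat ?n t j i * M" ?n] mult_carrier_mat[OF addrow_mat_carrier M] by simp
  also have "\<dots> = kernel_dim (addcol t j i (addrow t j i M))" unfolding C using M by (simp add: kernel_dim_def)
  also have "\<dots> = kernel_dim M'" using block_kernel[OF T(1) i T(2) T(3)] T(4) by simp
  finally show ?thesis .
qed



definition aE :: "(nat \<times> nat) set \<Rightarrow> nat \<Rightarrow> nat \<Rightarrow> complex" where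
  "aE E r c = (if (r,c) \<in> E then 1 else 0)"

definition dd :: "nat \<Rightarrow> (nat \<times> nat) set \<Rightarrow> nat \<Rightarrow> complex" where
  "dd n E r = (\<Sum>k\<in>{0..<n}. aE E r k * aE E k r)"

lemma ddgl_carrier: "ddgl n E \<in> carrier_mat n n"
  by (simp add: ddgl_def Let_def poly_mat3_def)

lemma ddgl_entry: assumes "r < n" "c < n"
  shows "ddgl n E $$ (r,c) = [: (if r = c then 1 else 0), - aE E r c,
     (if r = c then dd n E r else 0) - (if r = c then 1 else 0), aE E r c - aE E r c * aE E c r :]"
  using assms
  by (simp add: ddgl_def Let_def poly_mat3_def adj_mat_def hadamard_def diag_part_def aE_def dd_def scalar_prod_def)

lemma aE_del: "aE (del_vertex i E) r c = aE E (insert_index i r) (insert_index i c)"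
  by (simp add: aE_def del_vertex_def insert_index_def)

lemma poly_sub_aux: "[:a,b,c,d:] - [:0,1:] * [:0,1:] = [:a,b,c-1,d::complex:]"
  by simp

theorem theorem3p8:
  fixes n i :: nat and E :: "(nat \<times> nat) set"
  assumes "digraph n E" and "i < n" and "reciprocal_leaf E i"
  defines "M \<equiv> ddgl n E" and "M' \<equiv> ddgl (n - 1) (del_vertex i E)"
  shows "\<forall>x :: complex. (finite_eigenvalue M x \<longleftrightarrow> finite_eigenvalue M' x)
           \<and> (finite_eigenvalue M x \<longrightarrow>
                alg_mult M x = alg_mult M' x \<and> geom_mult M x = geom_mult M' x)"
proof -
  note dg = assms(1)[unfolded digraph_def]
  obtain j where ji: "j \<noteq> i" and ij: "(i,j) \<in> E" "(j,i) \<in> E"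
    and uniq: "\<And>k. k \<noteq> i \<Longrightarrow> (i,k) \<in> E \<or> (k,i) \<in> E \<Longrightarrow> k = j"
  proof -
    have ex: "\<exists>!j. j \<noteq> i \<and> ((i, j) \<in> E \<or> (j, i) \<in> E)"
      and rec: "\<forall>j. j \<noteq> i \<and> ((i, j) \<in> E \<or> (j, i) \<in> E) \<longrightarrow> (i, j) \<in> E \<and> (j, i) \<in> E"
      using assms(3) unfolding reciprocal_leaf_def by auto
    from ex obtain j where j1: "j \<noteq> i \<and> ((i, j) \<in> E \<or> (j, i) \<in> E)"
      and ju: "\<And>k. k \<noteq> i \<and> ((i, k) \<in> E \<or> (k, i) \<in> E) \<Longrightarrow> k = j" by (elim ex1E) blast
    from j1 rec have "(i, j) \<in> E" "(j, i) \<in> E" by auto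
    thus ?thesis using that j1 ju by blast
  qed
  define m where "m = n - 1"
  have n: "n = Suc m" using assms(2) m_def by simp
  have i: "i < Suc m" using assms(2) n by simp
  have j: "j < Suc m" using ij dg n by auto
  have noloop: "(k,k) \<notin> E" for k using dg by auto
  let ?t = "[:0,1::complex:]"
  have MC: "M \<in> carrier_mat (Suc m) (Suc m)" unfolding M_def n by (rule ddgl_carrier)
  have M'C: "M' \<in> carrier_mat m m" unfolding M'_def m_def[symmetric] by (rule ddgl_carrier)
  have ddi: "dd (Suc m) E i = 1"
  proof -
    have "dd (Suc m) E i = (\<Sum>k\<in>{j}. aE E i k * aE E k i)" unfolding dd_def
    proof (rule sum.mono_neutral_right)
      show "\<forall>k\<in>{0..<Suc m} - {j}. aE E i k * aE E k i = 0"
      proof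
        fix k assume k: "k \<in> {0..<Suc m} - {j}"
        show "aE E i k * aE E k i = 0"
        proof (cases "(i,k) \<in> E")
          case True
          hence "k \<noteq> i" using noloop by auto
          hence "k = j" using uniq True by blast
          thus ?thesis using k by simp
        qed (simp add: aE_def)
      qed
    qed (use j in auto)
    also have "\<dots> = 1" using ij by (simp add: aE_def)
    finally show ?thesis .
  qed
  have Mii: "M $$ (i,i) = 1" unfolding M_def n ddgl_entry[OF i i] ddi using noloop by (simp add: aE_def)
  have Mrow: "M $$ (i,c) = (if c = j then - ?t else 0)" if "c < Suc m" "c \<noteq> i" for c
  proof (cases "c = j")
    case True thus ?thesis unfolding M_def n ddgl_entry[OF i that(1)] using that ij by (simp add: aE_def)
  next
    case False
    hence "(i,c) \<notin> E" using uniq[of c] that by blast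
    thus ?thesis unfolding M_def n ddgl_entry[OF i that(1)] using that False by (simp add: aE_def)
  qed
  have Mcol: "M $$ (r,i) = (if r = j then - ?t else 0)" if "r < Suc m" "r \<noteq> i" for r
  proof (cases "r = j")
    case True thus ?thesis unfolding M_def n ddgl_entry[OF that(1) i] using that ij by (simp add: aE_def)
  next
    case False
    hence "(r,i) \<notin> E" using uniq[of r] that by blast
    thus ?thesis unfolding M_def n ddgl_entry[OF that(1) i] using that False by (simp add: aE_def)
  qed
  have M'e: "M' $$ (r,c) = M $$ (insert_index i r, insert_index i c)
        - (if insert_index i r = j \<and> insert_index i c = j then ?t * ?t else 0)"
    if rc: "r < m" "c < m" for r c
  proof -
    let ?f = "insert_index i"
    have fr: "?f r < Suc m" "?f r \<noteq> i" "?f c < Suc m" using rc by (auto simp: insert_index_def)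
    have inj: "(?f r = ?f c) = (r = c)" by (auto simp: insert_index_def)
    have dd': "dd m (del_vertex i E) r = dd (Suc m) E (?f r) - (if ?f r = j then 1 else 0)"
    proof -
      have "dd m (del_vertex i E) r = (\<Sum>k\<in>{0..<m}. (\<lambda>k. aE E (?f r) k * aE E k (?f r)) (?f k))"
        unfolding dd_def aE_del by simp
      also have "\<dots> = (\<Sum>k\<in>?f ` {0..<m}. aE E (?f r) k * aE E k (?f r))"
        by (rule sum.reindex[symmetric, unfolded comp_def], rule insert_index_inj_on)
      also have "\<dots> = (\<Sum>k\<in>{0..<Suc m} - {i}. aE E (?f r) k * aE E k (?f r))"
        unfolding insert_index_image[OF i] ..
      also have "\<dots> = dd (Suc m) E (?f r) - aE E (?f r) i * aE E i (?f r)"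
        unfolding dd_def by (simp add: sum_diff1 i)
      also have "aE E (?f r) i * aE E i (?f r) = (if ?f r = j then 1 else 0)"
      proof (cases "?f r = j")
        case True thus ?thesis using ij by (simp add: aE_def)
      next
        case False
        hence "(?f r, i) \<notin> E" using uniq[OF fr(2)] by blast
        thus ?thesis using False by (simp add: aE_def)
      qed
      finally show ?thesis .
    qed
    show ?thesis
      unfolding M'_def m_def[symmetric] ddgl_entry[OF rc, of "del_vertex i E"]
      unfolding M_def n ddgl_entry[OF fr(1,3)] aE_del dd' inj
      using inj by (cases "r = c"; cases "?f r = j"; simp add: poly_sub_aux)
  qed
  have detEq: "det M = det M'" by (rule transform_det[OF MC M'C i j ji Mii Mrow Mcol M'e])
  have kerEq: "kernel_dim (eval_pmat M x) = kernel_dim (eval_pmat M' x)" for x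
  proof (rule transform_kernel[where t = x and i = i and j = j and m = m])
    show "eval_pmat M x \<in> carrier_mat (Suc m) (Suc m)" using MC by (simp add: eval_pmat_def)
    show "eval_pmat M' x \<in> carrier_mat m m" using M'C by (simp add: eval_pmat_def)
    show "eval_pmat M x $$ (i,i) = 1" using MC i Mii by (simp add: eval_pmat_def)
    show "eval_pmat M x $$ (i,c) = (if c = j then - x else 0)" if "c < Suc m" "c \<noteq> i" for c
      using MC i that Mrow[OF that] by (simp add: eval_pmat_def)
    show "eval_pmat M x $$ (r,i) = (if r = j then - x else 0)" if "r < Suc m" "r \<noteq> i" for r
      using MC i that Mcol[OF that] by (simp add: eval_pmat_def)
    show "eval_pmat M' x $$ (r,c) = eval_pmat M x $$ (insert_index i r, insert_index i c)
        - (if insert_index i r = j \<and> insert_index i c = j then x * x else 0)"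
      if rc: "r < m" "c < m" for r c
    proof -
      have fr: "insert_index i r < Suc m" "insert_index i c < Suc m" using rc by (auto simp: insert_index_def)
      show ?thesis using M'e[OF rc] MC M'C fr rc by (simp add: eval_pmat_def)
    qed
  qed (use i j ji in auto)
  show ?thesis
    unfolding finite_eigenvalue_def regular_pmat_def alg_mult_def geom_mult_def detEq kerEq
    using MC M'C by auto
qed

end
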